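(* Let $(X_t)_{t\ge0}$ be a Markov process on $\mathbb{R}$ with semigroup $P_tg(x)=\mathbb{E}_x[g(X_t)]$ and extended generator $A$. 1. Let $h\in\mathcal D(P)$ and $x\in\mathbb{R}$. Suppose (i) $\lim_{|t-s|\to0}\mathbb{E}_x|X_s-X_t|^2=0$; (ii) for all $T>0$, $\sup_{0\le t\le T}\mathbb{E}_x|X_t|^4<\infty$; (iii) there is $C>0$ with $|h(y)-h(z)|\le C(1+y^2+z^2)|y-z|$ for all $y,z\in\mathbb{R}$. Then $s\mapsto P_sh(x)$ is continuous on $\mathbb{R}_+$. 2. Suppose (i) and (ii) hold and (iii)': $g\in\mathcal D'(A)$ and there is $C>0$ with $|Ag(y)-Ag(z)|\le C(1+y^2+z^2)|y-z|$ for all $y,z$. Then $s\mapsto P_sg(x)$ is differentiable on $\mathbb{R}_+$ and $\frac d{dt}P_tg(x)=P_tAg(x)$.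
   Context: $\mathcal D(P)$ is the set of measurable $g:\mathbb{R}\to\mathbb{R}$ with $\mathbb{E}_x|g(X_t)|<\infty$ for all $x,t$. The extended domain $\mathcal D'(A)$ is the set of $g\in\mathcal D(P)$ for which there is a measurable $Ag\in\mathcal D(P)$ such that $t\mapsto P_tAg(x)$ is continuous at $0$ and, for all $x\in\mathbb{R}$, $t\ge0$: $\mathbb{E}_x[g(X_t)]-g(x)=\mathbb{E}_x\int_0^tAg(X_s)ds$ and $\mathbb{E}_x\int_0^t|Ag(X_s)|ds<\infty$. *)

theory Defs
  imports "HOL-Probability.Probability"
begin

text \<open>A process on a common measurable space, with a family of probability laws
  M x (the law started at x), X t \<omega> the position at time t \<ge> 0.\<close>

definition natural_filtration :: "'a measure \<Rightarrow> (real \<Rightarrow> 'a \<Rightarrow> real) \<Rightarrow> real \<Rightarrow> 'a measure" where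
  "natural_filtration N X s =
     sigma (space N) {X u -` B \<inter> space N | u B. 0 \<le> u \<and> u \<le> s \<and> B \<in> sets borel}"

definition markov_process :: "(real \<Rightarrow> 'a measure) \<Rightarrow> (real \<Rightarrow> 'a \<Rightarrow> real) \<Rightarrow> bool" where
  "markov_process M X \<longleftrightarrow>
     (\<forall>x. prob_space (M x)) \<and>
     (\<forall>x y. sets (M x) = sets (M y)) \<and>
     (\<forall>x t. 0 \<le> t \<longrightarrow> X t \<in> borel_measurable (M x)) \<and>
     (\<forall>x. (\<lambda>(t, \<omega>). X t \<omega>) \<in> borel_measurable (restrict_space lborel {0..} \<Otimes>\<^sub>M M x)) \<and>
     (\<forall>x. AE \<omega> in M x. X 0 \<omega> = x) \<and>
     (\<forall>x s t f. 0 \<le> s \<longrightarrow> 0 \<le> t \<longrightarrow> f \<in> borel_measurable borel \<longrightarrow> (\<exists>B. \<forall>y. \<bar>f y\<bar> \<le> B) \<longrightarrow>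
        (AE \<omega> in M x. real_cond_exp (M x) (natural_filtration (M x) X s) (\<lambda>\<omega>. f (X (s + t) \<omega>)) \<omega>
                        = (\<integral>\<omega>'. f (X t \<omega>') \<partial>M (X s \<omega>))))"

definition semigroup :: "(real \<Rightarrow> 'a measure) \<Rightarrow> (real \<Rightarrow> 'a \<Rightarrow> real) \<Rightarrow> real \<Rightarrow> (real \<Rightarrow> real) \<Rightarrow> real \<Rightarrow> real" where
  "semigroup M X t g x = (\<integral>\<omega>. g (X t \<omega>) \<partial>M x)"

definition in_DP :: "(real \<Rightarrow> 'a measure) \<Rightarrow> (real \<Rightarrow> 'a \<Rightarrow> real) \<Rightarrow> (real \<Rightarrow> real) \<Rightarrow> bool" where
  "in_DP M X g \<longleftrightarrow> g \<in> borel_measurable borel \<and>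
     (\<forall>x t. 0 \<le> t \<longrightarrow> integrable (M x) (\<lambda>\<omega>. g (X t \<omega>)))"

definition ext_gen :: "(real \<Rightarrow> 'a measure) \<Rightarrow> (real \<Rightarrow> 'a \<Rightarrow> real) \<Rightarrow> (real \<Rightarrow> real) \<Rightarrow> (real \<Rightarrow> real) \<Rightarrow> bool" where
  "ext_gen M X g Ag \<longleftrightarrow> in_DP M X g \<and> in_DP M X Ag \<and>
     (\<forall>x. continuous (at 0 within {0..}) (\<lambda>t. semigroup M X t Ag x)) \<and>
     (\<forall>x t. 0 \<le> t \<longrightarrow>
        semigroup M X t g x - g x =
          (\<integral>\<omega>. set_lebesgue_integral lborel {0..t} (\<lambda>s. Ag (X s \<omega>)) \<partial>M x) \<and>
        (\<integral>\<^sup>+\<omega>. (\<integral>\<^sup>+s\<in>{0..t}. ennreal \<bar>Ag (X s \<omega>)\<bar> \<partial>lborel) \<partial>M x) < \<infinity>)"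

definition L2_continuous :: "(real \<Rightarrow> 'a measure) \<Rightarrow> (real \<Rightarrow> 'a \<Rightarrow> real) \<Rightarrow> real \<Rightarrow> bool" where
  "L2_continuous M X x \<longleftrightarrow>
     (\<forall>\<epsilon>>0. \<exists>\<delta>>0. \<forall>s t. 0 \<le> s \<longrightarrow> 0 \<le> t \<longrightarrow> \<bar>t - s\<bar> < \<delta> \<longrightarrow>
        (\<integral>\<^sup>+\<omega>. ennreal ((X s \<omega> - X t \<omega>)\<^sup>2) \<partial>M x) < ennreal \<epsilon>)"

definition bounded_4th_moments :: "(real \<Rightarrow> 'a measure) \<Rightarrow> (real \<Rightarrow> 'a \<Rightarrow> real) \<Rightarrow> real \<Rightarrow> bool" where
  "bounded_4th_moments M X x \<longleftrightarrow>
     (\<forall>T>0. (SUP t\<in>{0..T}. \<integral>\<^sup>+\<omega>. ennreal (\<bar>X t \<omega>\<bar> ^ 4) \<partial>M x) < \<infinity>)"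

end

theory Submission
  imports Defs
begin

lemma amgm_aux:
  fixes a d lam :: real assumes "a \<ge> 0" "lam > 0"
  shows "a * \<bar>d\<bar> \<le> lam/2 * a\<^sup>2 + 1/(2*lam) * d\<^sup>2"
proof -
  have "0 \<le> (lam * a - \<bar>d\<bar>)\<^sup>2 / lam" using assms by simp
  also have "(lam * a - \<bar>d\<bar>)\<^sup>2 / lam = lam * a\<^sup>2 - 2 * a * \<bar>d\<bar> + d\<^sup>2 / lam"
    using assms by (simp add: power2_eq_square field_simps)
  finally show ?thesis by (simp add: field_simps)
qed

lemma sq_aux:
  fixes y z :: real
  shows "(1 + y\<^sup>2 + z\<^sup>2)\<^sup>2 \<le> 3 * (1 + \<bar>y\<bar>^4 + \<bar>z\<bar>^4)"
proof -
  have A: "(1 + a + b)\<^sup>2 \<le> 3 * (1 + a\<^sup>2 + b\<^sup>2)" for a b :: real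
    using sum_squares_ge_zero[of "a-1" "b-1"] sum_squares_ge_zero[of "a-b" 0]
    by (simp add: power2_eq_square algebra_simps)
  have "\<bar>y\<bar>^4 = (y\<^sup>2)\<^sup>2" "\<bar>z\<bar>^4 = (z\<^sup>2)\<^sup>2" by (simp_all add: power_even_abs flip: power_mult)
  with A[of "y\<^sup>2" "z\<^sup>2"] show ?thesis by simp
qed

lemma ennreal3: "0 \<le> p \<Longrightarrow> 0 \<le> q \<Longrightarrow> ennreal (3 * (1 + p + q)) = ennreal 3 * (1 + ennreal p + ennreal q)"
  by (simp add: ennreal_mult ennreal_plus)

lemma nn_cmult_real:
  fixes f :: "'b \<Rightarrow> real"
  assumes "c \<ge> 0" "f \<in> borel_measurable M"
  shows "(\<integral>\<^sup>+\<omega>. ennreal (c * f \<omega>) \<partial>M) = ennreal c * (\<integral>\<^sup>+\<omega>. ennreal (f \<omega>) \<partial>M)"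
  using assms by (simp add: ennreal_mult' nn_integral_cmult)

lemma part1_unif:
  fixes M :: "real \<Rightarrow> 'a measure" and X :: "real \<Rightarrow> 'a \<Rightarrow> real"
  assumes mp: "markov_process M X" and hD: "in_DP M X h" and L2: "L2_continuous M X x"
    and B4: "bounded_4th_moments M X x" and C: "C > 0"
    and lip: "\<forall>y z. \<bar>h y - h z\<bar> \<le> C * (1 + y\<^sup>2 + z\<^sup>2) * \<bar>y - z\<bar>"
    and T: "T > 0" and e: "e > 0"
  shows "\<exists>d>0. \<forall>s t. 0 \<le> s \<longrightarrow> s \<le> T \<longrightarrow> 0 \<le> t \<longrightarrow> t \<le> T \<longrightarrow> \<bar>t - s\<bar> < d \<longrightarrow>
           \<bar>semigroup M X s h x - semigroup M X t h x\<bar> < e"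
proof -
  interpret N: prob_space "M x" using mp by (simp add: markov_process_def)
  have Xm: "X t \<in> borel_measurable (M x)" if "0 \<le> t" for t
    using mp that by (simp add: markov_process_def)
  have hm[measurable]: "h \<in> borel_measurable borel" using hD by (simp add: in_DP_def)
  have hint: "integrable (M x) (\<lambda>\<omega>. h (X t \<omega>))" if "0 \<le> t" for t
    using hD that by (simp add: in_DP_def)
  define S where "S = (SUP t\<in>{0..T}. \<integral>\<^sup>+\<omega>. ennreal (\<bar>X t \<omega>\<bar> ^ 4) \<partial>M x)"
  have "S < \<infinity>"
    using B4 T by (simp add: bounded_4th_moments_def S_def)
  then obtain k where k0: "k \<ge> 0" and kS: "S = ennreal k"
    by (cases S rule: ennreal_cases) auto
  have kb: "(\<integral>\<^sup>+\<omega>. ennreal (\<bar>X t \<omega>\<bar> ^ 4) \<partial>M x) \<le> ennreal k" if "0 \<le> t" "t \<le> T" for t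
  proof -
    have "(\<integral>\<^sup>+\<omega>. ennreal (\<bar>X t \<omega>\<bar> ^ 4) \<partial>M x) \<le> S"
      unfolding S_def by (rule SUP_upper) (use that in auto)
    then show ?thesis using kS by simp
  qed
  define lam where "lam = e / (3 * C * (1 + k + k))"
  have lam: "lam > 0" using e C k0 by (simp add: lam_def)
  define eta where "eta = e * lam / C"
  have eta: "eta > 0" using e C lam by (simp add: eta_def)
  obtain d where d: "d > 0" and dP: "\<And>s t. 0 \<le> s \<Longrightarrow> 0 \<le> t \<Longrightarrow> \<bar>t - s\<bar> < d \<Longrightarrow>
        (\<integral>\<^sup>+\<omega>. ennreal ((X s \<omega> - X t \<omega>)\<^sup>2) \<partial>M x) < ennreal eta"
    using L2 eta unfolding L2_continuous_def by blast
  show ?thesis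
  proof (intro exI[of _ d] conjI allI impI d)
    fix s t assume s0: "0 \<le> s" and sT: "s \<le> T" and t0: "0 \<le> t" and tT: "t \<le> T" and st: "\<bar>t - s\<bar> < d"
    note [measurable] = Xm[OF s0] Xm[OF t0]
    define a where "a = (\<lambda>\<omega>. 1 + (X s \<omega>)\<^sup>2 + (X t \<omega>)\<^sup>2)"
    have am[measurable]: "a \<in> borel_measurable (M x)" unfolding a_def by measurable
    have "semigroup M X s h x - semigroup M X t h x = (\<integral>\<omega>. h (X s \<omega>) - h (X t \<omega>) \<partial>M x)"
      unfolding semigroup_def using hint[OF s0] hint[OF t0] by simp
    then have step1: "ennreal \<bar>semigroup M X s h x - semigroup M X t h x\<bar>
        \<le> (\<integral>\<^sup>+\<omega>. ennreal \<bar>h (X s \<omega>) - h (X t \<omega>)\<bar> \<partial>M x)"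
      using integral_norm_bound_ennreal[of "M x" "\<lambda>\<omega>. h (X s \<omega>) - h (X t \<omega>)"] hint[OF s0] hint[OF t0]
      by simp
    also have "\<dots> \<le> (\<integral>\<^sup>+\<omega>. ennreal (lam * C / 2 * (a \<omega>)\<^sup>2) + ennreal (C / (2 * lam) * (X s \<omega> - X t \<omega>)\<^sup>2) \<partial>M x)"
    proof (intro nn_integral_mono)
      fix \<omega>
      have "\<bar>h (X s \<omega>) - h (X t \<omega>)\<bar> \<le> C * (a \<omega> * \<bar>X s \<omega> - X t \<omega>\<bar>)"
        using lip unfolding a_def by (simp add: mult.assoc)
      also have "\<dots> \<le> C * (lam/2 * (a \<omega>)\<^sup>2 + 1/(2*lam) * (X s \<omega> - X t \<omega>)\<^sup>2)"
        using amgm_aux[of "a \<omega>" lam "X s \<omega> - X t \<omega>"] lam C unfolding a_def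
        by (intro mult_left_mono) (auto simp: add_nonneg_nonneg)
      also have "\<dots> = lam * C / 2 * (a \<omega>)\<^sup>2 + C / (2 * lam) * (X s \<omega> - X t \<omega>)\<^sup>2"
        by (simp add: field_simps)
      finally show "ennreal \<bar>h (X s \<omega>) - h (X t \<omega>)\<bar> \<le> ennreal (lam * C / 2 * (a \<omega>)\<^sup>2) + ennreal (C / (2 * lam) * (X s \<omega> - X t \<omega>)\<^sup>2)"
        using lam C by (simp add: ennreal_plus[symmetric] ennreal_leI del: ennreal_plus)
    qed
    also have "\<dots> = (\<integral>\<^sup>+\<omega>. ennreal (lam * C / 2 * (a \<omega>)\<^sup>2) \<partial>M x) + (\<integral>\<^sup>+\<omega>. ennreal (C / (2 * lam) * (X s \<omega> - X t \<omega>)\<^sup>2) \<partial>M x)"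
      by (intro nn_integral_add) measurable
    also have "\<dots> = ennreal (lam * C / 2) * (\<integral>\<^sup>+\<omega>. ennreal ((a \<omega>)\<^sup>2) \<partial>M x)
        + ennreal (C / (2 * lam)) * (\<integral>\<^sup>+\<omega>. ennreal ((X s \<omega> - X t \<omega>)\<^sup>2) \<partial>M x)"
    proof -
      have m1: "(\<lambda>\<omega>. (a \<omega>)\<^sup>2) \<in> borel_measurable (M x)" by measurable
      have m2: "(\<lambda>\<omega>. (X s \<omega> - X t \<omega>)\<^sup>2) \<in> borel_measurable (M x)" by measurable
      have e1: "(\<integral>\<^sup>+\<omega>. ennreal (lam * C / 2 * (a \<omega>)\<^sup>2) \<partial>M x) = ennreal (lam * C / 2) * (\<integral>\<^sup>+\<omega>. ennreal ((a \<omega>)\<^sup>2) \<partial>M x)"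
        by (rule nn_cmult_real) (use lam C m1 in auto)
      have e2: "(\<integral>\<^sup>+\<omega>. ennreal (C / (2 * lam) * (X s \<omega> - X t \<omega>)\<^sup>2) \<partial>M x) = ennreal (C / (2 * lam)) * (\<integral>\<^sup>+\<omega>. ennreal ((X s \<omega> - X t \<omega>)\<^sup>2) \<partial>M x)"
        by (rule nn_cmult_real) (use lam C m2 in auto)
      show ?thesis by (simp only: e1 e2)
    qed
    finally have main: "ennreal \<bar>semigroup M X s h x - semigroup M X t h x\<bar> \<le> ennreal (lam * C / 2) * (\<integral>\<^sup>+\<omega>. ennreal ((a \<omega>)\<^sup>2) \<partial>M x)
        + ennreal (C / (2 * lam)) * (\<integral>\<^sup>+\<omega>. ennreal ((X s \<omega> - X t \<omega>)\<^sup>2) \<partial>M x)" .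
    have "(\<integral>\<^sup>+\<omega>. ennreal ((a \<omega>)\<^sup>2) \<partial>M x) \<le> (\<integral>\<^sup>+\<omega>. ennreal 3 * (1 + ennreal (\<bar>X s \<omega>\<bar>^4) + ennreal (\<bar>X t \<omega>\<bar>^4)) \<partial>M x)"
    proof (intro nn_integral_mono)
      fix \<omega>
      show "ennreal ((a \<omega>)\<^sup>2) \<le> ennreal 3 * (1 + ennreal (\<bar>X s \<omega>\<bar>^4) + ennreal (\<bar>X t \<omega>\<bar>^4))"
        using sq_aux[of "X s \<omega>" "X t \<omega>"] ennreal3[of "\<bar>X s \<omega>\<bar>^4" "\<bar>X t \<omega>\<bar>^4"] unfolding a_def
        by (metis ennreal_leI zero_le_power abs_ge_zero ennreal_numeral)
    qed
    also have "\<dots> = ennreal 3 * (1 + (\<integral>\<^sup>+\<omega>. ennreal (\<bar>X s \<omega>\<bar>^4) \<partial>M x) + (\<integral>\<^sup>+\<omega>. ennreal (\<bar>X t \<omega>\<bar>^4) \<partial>M x))"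
      by (simp add: nn_integral_add nn_integral_cmult N.emeasure_space_1)
    also have "\<dots> \<le> ennreal 3 * (1 + ennreal k + ennreal k)"
      using kb[OF s0 sT] kb[OF t0 tT] by (intro mult_left_mono add_mono) auto
    also have "\<dots> = ennreal (3 * (1 + k + k))"
      using k0 by (rule ennreal3[symmetric, OF _ k0])
    finally have I4: "(\<integral>\<^sup>+\<omega>. ennreal ((a \<omega>)\<^sup>2) \<partial>M x) \<le> ennreal (3 * (1 + k + k))" .
    have I2lt: "(\<integral>\<^sup>+\<omega>. ennreal ((X s \<omega> - X t \<omega>)\<^sup>2) \<partial>M x) < ennreal eta"
      using dP[OF s0 t0 st] .
    define I2 where "I2 = (\<integral>\<^sup>+\<omega>. ennreal ((X s \<omega> - X t \<omega>)\<^sup>2) \<partial>M x)"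
    have "I2 < \<infinity>" using order.strict_trans[OF I2lt ennreal_less_top] unfolding I2_def by simp
    then obtain r where r0: "r \<ge> 0" and rI': "I2 = ennreal r"
      by (cases I2 rule: ennreal_cases) auto
    have rI: "(\<integral>\<^sup>+\<omega>. ennreal ((X s \<omega> - X t \<omega>)\<^sup>2) \<partial>M x) = ennreal r" using rI' unfolding I2_def .
    have r_eta: "r < eta" using I2lt rI r0 eta by (simp add: ennreal_less_iff)
    have "ennreal \<bar>semigroup M X s h x - semigroup M X t h x\<bar> \<le> ennreal (lam * C / 2) * ennreal (3 * (1 + k + k))
        + ennreal (C / (2 * lam)) * ennreal r"
    proof -
      have "ennreal (lam * C / 2) * (\<integral>\<^sup>+\<omega>. ennreal ((a \<omega>)\<^sup>2) \<partial>M x) \<le> ennreal (lam * C / 2) * ennreal (3 * (1 + k + k))"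
        by (rule mult_left_mono[OF I4]) simp
      then have "ennreal (lam * C / 2) * (\<integral>\<^sup>+\<omega>. ennreal ((a \<omega>)\<^sup>2) \<partial>M x)
          + ennreal (C / (2 * lam)) * (\<integral>\<^sup>+\<omega>. ennreal ((X s \<omega> - X t \<omega>)\<^sup>2) \<partial>M x)
          \<le> ennreal (lam * C / 2) * ennreal (3 * (1 + k + k))
          + ennreal (C / (2 * lam)) * (\<integral>\<^sup>+\<omega>. ennreal ((X s \<omega> - X t \<omega>)\<^sup>2) \<partial>M x)"
        by (rule add_right_mono)
      from order.trans[OF main this] show ?thesis by (simp only: rI)
    qed
    also have "\<dots> = ennreal (lam * C / 2 * (3 * (1 + k + k)) + C / (2 * lam) * r)"
    proof -
      have n1: "0 \<le> lam*C/2" "0 \<le> 3*(1+k+k)" "0 \<le> C/(2*lam)" using lam C k0 by auto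
      show ?thesis
        by (simp only: ennreal_plus[OF mult_nonneg_nonneg[OF n1(1) n1(2)] mult_nonneg_nonneg[OF n1(3) r0]]
          ennreal_mult[OF n1(1) n1(2)] ennreal_mult[OF n1(3) r0])
    qed
    finally have leE: "ennreal \<bar>semigroup M X s h x - semigroup M X t h x\<bar> \<le> ennreal (lam * C / 2 * (3 * (1 + k + k)) + C / (2 * lam) * r)" .
    have nn: "0 \<le> lam * C / 2 * (3 * (1 + k + k)) + C / (2 * lam) * r"
      using lam C k0 r0 by (intro add_nonneg_nonneg mult_nonneg_nonneg) auto
    have le: "\<bar>semigroup M X s h x - semigroup M X t h x\<bar> \<le> lam * C / 2 * (3 * (1 + k + k)) + C / (2 * lam) * r"
      using iffD1[OF ennreal_le_iff[OF nn] leE] .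
    have e1: "lam * C / 2 * (3 * (1 + k + k)) = e / 2"
    proof -
      have "3 * C * (1 + k + k) > 0" using C k0 by (intro mult_pos_pos) auto
      then have nz: "3 * C * (1 + k + k) \<noteq> 0" by (metis less_irrefl)
      have "lam * (3 * C * (1 + k + k)) = e" using nonzero_eq_divide_eq[OF nz, of lam e] lam_def by metis
      moreover have "lam * C / 2 * (3 * (1 + k + k)) = lam * (3 * C * (1 + k + k)) / 2" by (simp add: algebra_simps)
      ultimately show ?thesis by simp
    qed
    have "C / (2 * lam) * r < C / (2 * lam) * eta"
      using r_eta C lam by (intro mult_strict_left_mono) auto
    also have "C / (2 * lam) * eta = e / 2" using C lam unfolding eta_def by (simp add: field_simps)
    finally show "\<bar>semigroup M X s h x - semigroup M X t h x\<bar> < e" using le e1 by linarith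
  qed
qed


lemma part1_cont:
  fixes M :: "real \<Rightarrow> 'a measure" and X :: "real \<Rightarrow> 'a \<Rightarrow> real"
  assumes mp: "markov_process M X" and hD: "in_DP M X h" and L2: "L2_continuous M X x"
    and B4: "bounded_4th_moments M X x" and C: "C > 0"
    and lip: "\<forall>y z. \<bar>h y - h z\<bar> \<le> C * (1 + y\<^sup>2 + z\<^sup>2) * \<bar>y - z\<bar>"
  shows "continuous_on {0..} (\<lambda>s. semigroup M X s h x)"
  unfolding continuous_on_iff
proof (intro ballI allI impI)
  fix t e :: real assume t: "t \<in> {0..}" and e: "0 < e"
  have T: "t + 1 > 0" using t by auto
  obtain d where d: "d > 0" and dP: "\<forall>s t'. 0 \<le> s \<longrightarrow> s \<le> t + 1 \<longrightarrow> 0 \<le> t' \<longrightarrow> t' \<le> t + 1 \<longrightarrow> \<bar>t' - s\<bar> < d \<longrightarrow>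
           \<bar>semigroup M X s h x - semigroup M X t' h x\<bar> < e"
    using part1_unif[OF mp hD L2 B4 C lip T e] by blast
  show "\<exists>d>0. \<forall>x'\<in>{0..}. dist x' t < d \<longrightarrow> dist (semigroup M X x' h x) (semigroup M X t h x) < e"
  proof (intro exI[of _ "min d 1"] conjI ballI impI)
    show "0 < min d 1" using d by simp
    fix x' :: real assume x': "x' \<in> {0..}" and dx: "dist x' t < min d 1"
    then have "0 \<le> x'" "x' \<le> t + 1" "\<bar>t - x'\<bar> < d" using t by (auto simp: dist_real_def)
    then show "dist (semigroup M X x' h x) (semigroup M X t h x) < e"
      using dP t by (auto simp: dist_real_def)
  qed
qed

lemma fubini_part:
  fixes M :: "real \<Rightarrow> 'a measure" and X :: "real \<Rightarrow> 'a \<Rightarrow> real"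
  assumes mp: "markov_process M X" and AgD: "in_DP M X Ag"
    and fin: "(\<integral>\<^sup>+\<omega>. (\<integral>\<^sup>+s\<in>{0..u}. ennreal \<bar>Ag (X s \<omega>)\<bar> \<partial>lborel) \<partial>M x) < \<infinity>"
    and u: "u \<ge> 0"
    and Gc: "continuous_on {0..u} (\<lambda>s. semigroup M X s Ag x)"
  shows "(\<integral>\<omega>. set_lebesgue_integral lborel {0..u} (\<lambda>s. Ag (X s \<omega>)) \<partial>M x)
         = integral {0..u} (\<lambda>s. semigroup M X s Ag x)"
proof -
  interpret N: prob_space "M x" using mp by (simp add: markov_process_def)
  interpret P: pair_sigma_finite lborel "M x"
    by (simp add: pair_sigma_finite_def N.sigma_finite_measure_axioms lborel.sigma_finite_measure_axioms)
  have Agm[measurable]: "Ag \<in> borel_measurable borel" using AgD by (simp add: in_DP_def)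
  have Xj: "(\<lambda>(t, \<omega>). X t \<omega>) \<in> borel_measurable (restrict_space lborel {0..} \<Otimes>\<^sub>M M x)"
    using mp by (simp add: markov_process_def)
  have mmax: "(\<lambda>p. (max 0 (fst p), snd p)) \<in> measurable ((lborel :: real measure) \<Otimes>\<^sub>M M x) (restrict_space lborel {0..} \<Otimes>\<^sub>M M x)"
  proof -
    have m1: "(\<lambda>p. max 0 (fst p)) \<in> measurable ((lborel :: real measure) \<Otimes>\<^sub>M M x) (restrict_space lborel {0..})"
    proof (rule measurable_restrict_space2)
      show "(\<lambda>p. max 0 (fst p)) \<in> space ((lborel :: real measure) \<Otimes>\<^sub>M M x) \<rightarrow> {0..}" by (auto simp: Pi_iff)
      show "(\<lambda>p. max 0 (fst p)) \<in> measurable ((lborel :: real measure) \<Otimes>\<^sub>M M x) lborel"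
        unfolding measurable_lborel2 by measurable
    qed
    show ?thesis by (rule measurable_Pair[OF m1]) measurable
  qed
  have Xm2: "(\<lambda>p. X (max 0 (fst p)) (snd p)) \<in> borel_measurable (lborel \<Otimes>\<^sub>M M x)"
    using measurable_comp[OF mmax Xj] by (simp add: comp_def case_prod_beta)
  define f where "f = (\<lambda>s \<omega>. indicator {0..u} s * Ag (X (max 0 s) \<omega>) :: real)"
  have fm: "case_prod f \<in> borel_measurable (lborel \<Otimes>\<^sub>M M x)"
  proof -
    have "(\<lambda>p. indicator {0..u} (fst p) * Ag (X (max 0 (fst p)) (snd p)) :: real) \<in> borel_measurable (lborel \<Otimes>\<^sub>M M x)"
      using Xm2 by measurable
    then show ?thesis unfolding f_def by (simp add: case_prod_beta')
  qed
  have inner: "(\<integral>\<^sup>+s. ennreal (norm (f s \<omega>)) \<partial>lborel) = (\<integral>\<^sup>+s\<in>{0..u}. ennreal \<bar>Ag (X s \<omega>)\<bar> \<partial>lborel)" for \<omega>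
    by (rule nn_integral_cong) (auto simp: f_def split: split_indicator)
  have "integrable (lborel \<Otimes>\<^sub>M M x) (case_prod f)"
  proof (rule integrableI_bounded[OF fm])
    have "(\<integral>\<^sup>+p. ennreal (norm (case_prod f p)) \<partial>(lborel \<Otimes>\<^sub>M M x))
        = (\<integral>\<^sup>+\<omega>. (\<integral>\<^sup>+s. ennreal (norm (f s \<omega>)) \<partial>lborel) \<partial>M x)"
    proof -
      have "(\<lambda>p. ennreal (norm (case_prod f p))) \<in> borel_measurable ((lborel :: real measure) \<Otimes>\<^sub>M M x)"
        using fm by measurable
      from P.nn_integral_snd[OF this] show ?thesis by simp
    qed
    also have "\<dots> = (\<integral>\<^sup>+\<omega>. (\<integral>\<^sup>+s\<in>{0..u}. ennreal \<bar>Ag (X s \<omega>)\<bar> \<partial>lborel) \<partial>M x)"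
      by (simp only: inner)
    finally show "(\<integral>\<^sup>+p. ennreal (norm (case_prod f p)) \<partial>(lborel \<Otimes>\<^sub>M M x)) < \<infinity>" using fin by simp
  qed
  from P.Fubini_integral[OF this]
  have F: "(\<integral>\<omega>. (\<integral>s. f s \<omega> \<partial>lborel) \<partial>M x) = (\<integral>s. (\<integral>\<omega>. f s \<omega> \<partial>M x) \<partial>lborel)" .
  have L: "(\<integral>s. f s \<omega> \<partial>lborel) = set_lebesgue_integral lborel {0..u} (\<lambda>s. Ag (X s \<omega>))" for \<omega>
    unfolding set_lebesgue_integral_def f_def
    by (rule Bochner_Integration.integral_cong) (auto split: split_indicator)
  have R: "(\<integral>\<omega>. f s \<omega> \<partial>M x) = indicator {0..u} s * semigroup M X s Ag x" for s
  proof (cases "s \<in> {0..u}")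
    case True
    then have "max 0 s = s" by auto
    then show ?thesis unfolding f_def semigroup_def by simp
  next
    case False
    then show ?thesis unfolding f_def by simp
  qed
  have "(\<integral>s. indicator {0..u} s * semigroup M X s Ag x \<partial>lborel) = set_lebesgue_integral lborel {0..u} (\<lambda>s. semigroup M X s Ag x)"
    unfolding set_lebesgue_integral_def by simp
  also have "\<dots> = integral {0..u} (\<lambda>s. semigroup M X s Ag x)"
    by (rule set_borel_integral_eq_integral(2)[OF borel_integrable_atLeastAtMost'[OF Gc]])
  finally show ?thesis using F by (simp only: L R)
qed

lemma part2:
  fixes M :: "real \<Rightarrow> 'a measure" and X :: "real \<Rightarrow> 'a \<Rightarrow> real"
  assumes mp: "markov_process M X" and L2: "L2_continuous M X x"
    and B4: "bounded_4th_moments M X x" and eg: "ext_gen M X g Ag" and C: "C > 0"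
    and lip: "\<forall>y z. \<bar>Ag y - Ag z\<bar> \<le> C * (1 + y\<^sup>2 + z\<^sup>2) * \<bar>y - z\<bar>"
    and t: "t \<ge> 0"
  shows "((\<lambda>s. semigroup M X s g x) has_real_derivative semigroup M X t Ag x) (at t within {0..})"
proof -
  have AgD: "in_DP M X Ag" using eg by (simp add: ext_gen_def)
  have Gc: "continuous_on {0..} (\<lambda>s. semigroup M X s Ag x)"
    by (rule part1_cont[OF mp AgD L2 B4 C lip])
  have key: "semigroup M X u g x = g x + integral {0..u} (\<lambda>s. semigroup M X s Ag x)" if u: "u \<ge> 0" for u
  proof -
    from eg u have e1: "semigroup M X u g x - g x =
          (\<integral>\<omega>. set_lebesgue_integral lborel {0..u} (\<lambda>s. Ag (X s \<omega>)) \<partial>M x)"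
      and fin: "(\<integral>\<^sup>+\<omega>. (\<integral>\<^sup>+s\<in>{0..u}. ennreal \<bar>Ag (X s \<omega>)\<bar> \<partial>lborel) \<partial>M x) < \<infinity>"
      by (auto simp: ext_gen_def)
    have "continuous_on {0..u} (\<lambda>s. semigroup M X s Ag x)"
      by (rule continuous_on_subset[OF Gc]) auto
    from fubini_part[OF mp AgD fin u this] e1 show ?thesis by simp
  qed
  have "((\<lambda>u. integral {0..u} (\<lambda>s. semigroup M X s Ag x)) has_real_derivative semigroup M X t Ag x) (at t within {0..t+1})"
    by (rule integral_has_real_derivative) (use t in \<open>auto intro: continuous_on_subset[OF Gc]\<close>)
  from DERIV_add[OF DERIV_const[of "g x"] this]
  have D: "((\<lambda>u. g x + integral {0..u} (\<lambda>s. semigroup M X s Ag x)) has_real_derivative semigroup M X t Ag x) (at t within {0..t+1})"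
    by simp
  have "at t within {0..} = at t within {0..t+1}"
    by (rule at_within_nhd[where S="{..<t+1}"]) (use t in auto)
  with D have D': "((\<lambda>u. g x + integral {0..u} (\<lambda>s. semigroup M X s Ag x)) has_real_derivative semigroup M X t Ag x) (at t within {0..})"
    by simp
  show ?thesis
    by (rule has_field_derivative_transform_within[OF D' zero_less_one]) (use t key in auto)
qed

theorem proposition5p2:
  fixes M :: "real \<Rightarrow> 'a measure" and X :: "real \<Rightarrow> 'a \<Rightarrow> real"
  assumes "markov_process M X"
  shows "(\<forall>h x C. in_DP M X h \<and> L2_continuous M X x \<and> bounded_4th_moments M X x \<and> C > 0 \<and>
            (\<forall>y z. \<bar>h y - h z\<bar> \<le> C * (1 + y\<^sup>2 + z\<^sup>2) * \<bar>y - z\<bar>)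
          \<longrightarrow> continuous_on {0..} (\<lambda>s. semigroup M X s h x))
       \<and> (\<forall>g Ag x C. L2_continuous M X x \<and> bounded_4th_moments M X x \<and> ext_gen M X g Ag \<and> C > 0 \<and>
            (\<forall>y z. \<bar>Ag y - Ag z\<bar> \<le> C * (1 + y\<^sup>2 + z\<^sup>2) * \<bar>y - z\<bar>)
          \<longrightarrow> (\<forall>t\<ge>0. ((\<lambda>s. semigroup M X s g x) has_real_derivative semigroup M X t Ag x)
                        (at t within {0..})))"
  using part1_cont[OF assms] part2[OF assms] by blast

end
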